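(* For all integers $m\ge0$ and $n\ge0$, $$v_m^{(n)}(Y)=\frac{(-1)^m}{m!}\,U(Y)^{bm-m-n+1}\,w_{m+n,bm}(Y).$$
   Context: Let $a,b\ge2$ be integers, $R$ a $\mathbb{Q}$-algebra, $u_0,\ldots,u_a\in R$, and $U(Y)=\sum_{j=0}^au_jY^j\in R[Y]$. Let $I(Y,Z)\in R[[Z]][Y]$ be the formal inverse of $Y+ZU(Y)^b$, i.e. the unique element with $I(Y+ZU(Y)^b,Z)=Y$, and define $v_k(Y)\in R[Y]$ by $U(I(Y,Z))=\sum_{k\ge0}v_k(Y)Z^k$. For each integer $\lambda\ge0$ define $w_{n,\lambda}(Y)\in R[Y]$ recursively by $w_{0,\lambda}(Y)=1/(\lambda+1)$ and $w_{n,\lambda}(Y)=(\lambda-n+2)U'(Y)w_{n-1,\lambda}(Y)+U(Y)w_{n-1,\lambda}'(Y)$ for $n\ge1$. The superscript $(n)$ denotes the $n$-th derivative in $Y$. (When the exponent $bm-m-n+1$ is negative, the right-hand side involves negative powers of $U(Y)$, i.e. it is a formal expression in which $U(Y)$ is inverted.) *)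

theory Defs
  imports "HOL-Computational_Algebra.Polynomial" "HOL-Computational_Algebra.Formal_Power_Series"
begin

definition qinv :: "nat \<Rightarrow> 'a::comm_ring_1" where
  "qinv k = (THE x. of_nat k * x = 1)"

definition lift_poly :: "'a::comm_ring_1 poly \<Rightarrow> 'a poly fps poly" where
  "lift_poly p = map_poly (\<lambda>c. fps_const [:c:]) p"

definition fps_Y :: "'a::comm_ring_1 poly fps" where
  "fps_Y = fps_const [:0, 1:]"

text \<open>For c in R[Y] and V in R[Y], the element c(Y + Z V(Y)) of R[Y][[Z]].\<close>
definition shiftY :: "'a::comm_ring_1 poly \<Rightarrow> 'a poly \<Rightarrow> 'a poly fps" where
  "shiftY V c = poly (lift_poly c) (fps_Y + fps_X * fps_const V)"

text \<open>For F(Y,Z) = sum_k F_k(Y) Z^k in R[Y][[Z]], the substitution F(Y + Z V(Y), Z)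
  = sum_k F_k(Y + Z V(Y)) Z^k.\<close>
definition substY :: "'a::comm_ring_1 poly \<Rightarrow> 'a poly fps \<Rightarrow> 'a poly fps" where
  "substY V F = Abs_fps (\<lambda>n. \<Sum>k\<le>n. fps_nth (shiftY V (fps_nth F k)) (n - k))"

text \<open>The formal inverse I(Y,Z) of Y + Z U(Y)^b: the unique I with I(Y + Z U(Y)^b, Z) = Y.\<close>
definition formal_inverse :: "'a::comm_ring_1 poly \<Rightarrow> nat \<Rightarrow> 'a poly fps" where
  "formal_inverse U b = (THE I. substY (U ^ b) I = fps_Y)"

definition vcoeff :: "'a::comm_ring_1 poly \<Rightarrow> nat \<Rightarrow> nat \<Rightarrow> 'a poly" where
  "vcoeff U b k = fps_nth (poly (lift_poly U) (formal_inverse U b)) k"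

text \<open>Formal derivative d/dY on R[Y] for an arbitrary commutative ring
  (the library's derivative requires no zero divisors).\<close>
definition dY :: "'a::comm_ring_1 poly \<Rightarrow> 'a poly" where
  "dY p = (\<Sum>i\<le>degree p. monom (of_nat i * coeff p i) (i - 1))"

text \<open>w_{n,lambda}(Y).  Note: w_{n+1} uses the factor lambda - (n+1) + 2 = lambda - n + 1.\<close>
fun wpoly :: "'a::comm_ring_1 poly \<Rightarrow> nat \<Rightarrow> nat \<Rightarrow> 'a poly" where
  "wpoly U 0 l = [: qinv (l + 1) :]"
| "wpoly U (Suc n) l =
     [: of_int (int l - int n + 1) :] * dY U * wpoly U n l + U * dY (wpoly U n l)"

end

theory Submission
  imports Defs
begin
unbundle fps_syntax

section \<open>Derivative\<close>

lemma coeff_dY: "coeff (dY p) n = of_nat (Suc n) * coeff p (Suc n)"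
proof -
  have "coeff (dY p) n = (\<Sum>i\<le>degree p. if i = Suc n then of_nat i * coeff p i else 0)"
    unfolding dY_def coeff_sum coeff_monom
    apply (intro sum.cong refl) apply (case_tac x) by auto
  also have "\<dots> = (if Suc n \<in> {..degree p} then of_nat (Suc n) * coeff p (Suc n) else 0)"
    by (rule sum.delta) simp
  also have "\<dots> = of_nat (Suc n) * coeff p (Suc n)"
    by (auto simp: coeff_eq_0)
  finally show ?thesis .
qed

lemma dY_add: "dY (p + q) = dY p + dY q"
  by (rule poly_eqI) (simp add: coeff_dY algebra_simps)
lemma dY_minus: "dY (- p) = - dY p"
  by (rule poly_eqI) (simp add: coeff_dY algebra_simps)
lemma dY_diff: "dY (p - q) = dY p - dY q"
  by (rule poly_eqI) (simp add: coeff_dY algebra_simps)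
lemma dY_smult: "dY (smult a p) = smult a (dY p)"
  by (rule poly_eqI) (simp add: coeff_dY algebra_simps)
lemma dY_0 [simp]: "dY 0 = 0"
  by (rule poly_eqI) (simp add: coeff_dY)
lemma dY_const [simp]: "dY [:a:] = 0"
  by (rule poly_eqI) (simp add: coeff_dY)
lemma dY_1 [simp]: "dY 1 = 0"
  by (rule poly_eqI) (simp add: coeff_dY)
lemma dY_pCons: "dY (pCons a p) = p + pCons 0 (dY p)"
  by (rule poly_eqI) (simp add: coeff_dY coeff_pCons algebra_simps split: nat.split)
lemma dY_sum: "dY (\<Sum>i\<in>A. f i) = (\<Sum>i\<in>A. dY (f i))"
  by (rule poly_eqI) (simp add: coeff_dY coeff_sum sum_distrib_left)

lemma dY_mult: "dY (p * q) = p * dY q + q * dY p"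
  by (induct p) (auto simp: dY_add dY_smult dY_pCons algebra_simps)

lemma smult_Suc: "smult (of_nat (Suc k)) (x::'a::comm_ring_1 poly) = smult (of_nat k) x + x"
  by (simp only: of_nat_Suc smult_add_left smult_1_left add.commute)

lemma dY_power_Suc: "dY (p ^ Suc n) = smult (of_nat (Suc n)) (p ^ n * dY p)"
proof (induction n)
  case (Suc n)
  have "dY (p ^ Suc (Suc n)) = p * dY (p ^ Suc n) + p ^ Suc n * dY p"
    by (metis dY_mult power_Suc mult.commute)
  also have "\<dots> = smult (of_nat (Suc n)) (p ^ Suc n * dY p) + p ^ Suc n * dY p"
    unfolding Suc by (simp add: algebra_simps)
  also have "\<dots> = smult (of_nat (Suc (Suc n))) (p ^ Suc n * dY p)"
    by (simp only: smult_Suc[of "Suc n"])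
  finally show ?case .
qed simp

lemma dY_power: "dY (p ^ n) = smult (of_nat n) (p ^ (n - 1) * dY p)"
  by (cases n) (simp_all add: dY_power_Suc del: power_Suc)

lemma dYn_0 [simp]: "(dY ^^ n) 0 = 0"
  by (induct n) simp_all
lemma dYn_add: "(dY ^^ n) (p + q) = (dY ^^ n) p + (dY ^^ n) q"
  by (induct n) (simp_all add: dY_add)
lemma dYn_diff: "(dY ^^ n) (p - q) = (dY ^^ n) p - (dY ^^ n) q"
  by (induct n) (simp_all add: dY_diff)
lemma dYn_smult: "(dY ^^ n) (smult a p) = smult a ((dY ^^ n) p)"
  by (induct n) (simp_all add: dY_smult)
lemma dYn_const [simp]: "(dY ^^ Suc n) [:a:] = 0"
  by (induct n) simp_all

lemma dY_Yp: "dY (pCons 0 p) = p + pCons 0 (dY p)"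
  by (simp add: dY_pCons)

lemma dYn_pCons: "(dY ^^ Suc i) (pCons a c) = smult (of_nat (Suc i)) ((dY ^^ i) c) + pCons 0 ((dY ^^ Suc i) c)"
proof (induction i)
  case 0
  then show ?case by (simp add: dY_pCons)
next
  case (Suc i)
  have "(dY ^^ Suc (Suc i)) (pCons a c) = dY ((dY ^^ Suc i) (pCons a c))" by simp
  also have "\<dots> = smult (of_nat (Suc i)) ((dY ^^ Suc i) c) + ((dY ^^ Suc i) c + pCons 0 ((dY ^^ Suc (Suc i)) c))"
    unfolding Suc by (simp add: dY_add dY_smult dY_pCons)
  also have "\<dots> = smult (of_nat (Suc (Suc i))) ((dY ^^ Suc i) c) + pCons 0 ((dY ^^ Suc (Suc i)) c)"
    by (simp only: smult_Suc[of "Suc i"] add.assoc)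
  finally show ?case .
qed


lemma smult_as_mult: "smult c p = [:c:] * p" by simp

section \<open>Lifting and shift\<close>

lemma lift_0 [simp]: "lift_poly 0 = 0"
  by (simp add: lift_poly_def)

lemma lift_pCons: "lift_poly (pCons a p) = pCons (fps_const [:a:]) (lift_poly p)"
  unfolding lift_poly_def by (rule map_poly_pCons) simp

lemma lift_add: "lift_poly (p + q) = lift_poly p + lift_poly q"
  unfolding lift_poly_def by (rule poly_eqI) (simp add: coeff_map_poly)

lemma const_mult_pc: "[:(c::'b::comm_ring_1) * x:] = [:c:] * [:x:]" by simp

lemma lift_smult: "lift_poly (smult a p) = smult (fps_const [:a:]) (lift_poly p)"
  unfolding lift_poly_def by (rule map_poly_smult) (simp, subst const_mult_pc, rule fps_const_mult[symmetric])

lemma lift_mult: "lift_poly (p * q) = lift_poly p * lift_poly q"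
  by (induct p) (simp_all add: lift_add lift_smult lift_pCons)

lemma shiftY_0 [simp]: "shiftY V 0 = 0"
  by (simp add: shiftY_def)

lemma shiftY_add: "shiftY V (p + q) = shiftY V p + shiftY V q"
  by (simp add: shiftY_def lift_add)

lemma shiftY_mult: "shiftY V (p * q) = shiftY V p * shiftY V q"
  by (simp add: shiftY_def lift_mult)

lemma shiftY_const: "shiftY V [:a:] = fps_const [:a:]"
  by (simp add: shiftY_def lift_pCons)

lemma shiftY_pCons: "shiftY V (pCons a c) = fps_const [:a:] + (fps_const [:0,1:] * shiftY V c + fps_X * (fps_const V * shiftY V c))"
  by (simp add: shiftY_def lift_pCons fps_Y_def algebra_simps)

context
  assumes Q: "\<forall>k::nat. k > 0 \<longrightarrow> (of_nat k :: 'a::comm_ring_1) dvd 1"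
begin

lemma qinv_inv: "k > 0 \<Longrightarrow> of_nat k * (qinv k :: 'a) = 1"
proof -
  assume "k > 0"
  then have "of_nat k dvd (1::'a)" using Q by blast
  then obtain x :: 'a where x: "1 = of_nat k * x" by (rule dvdE)
  have "qinv k = x" unfolding qinv_def
  proof (rule the_equality)
    show "of_nat k * x = 1" using x by simp
    fix y :: 'a assume "of_nat k * y = 1"
    then have "y = y * (of_nat k * x)" using x by simp
    also have "\<dots> = x * (of_nat k * y)" by (simp add: algebra_simps)
    also have "\<dots> = x" using \<open>of_nat k * y = 1\<close> by simp
    finally show "y = x" .
  qed
  then show ?thesis using x by simp
qed

lemma qinv_1 [simp]: "qinv 1 = (1::'a)"
  by (metis qinv_inv mult_1 of_nat_1 zero_less_one)

lemma qinv_Suc0 [simp]: "qinv (Suc 0) = (1::'a)"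
  using qinv_1 by simp

lemma qinv_fact0 [simp]: "qinv (fact 0) = (1::'a)"
  by simp

lemma qinv_mult: "a > 0 \<Longrightarrow> b > 0 \<Longrightarrow> qinv (a * b) = (qinv a * qinv b :: 'a)"
proof -
  assume a: "a > 0" and b: "b > 0"
  have "qinv (a * b) = qinv (a * b) * (of_nat a * qinv a) * (of_nat b * (qinv b :: 'a))"
    using qinv_inv[OF a] qinv_inv[OF b] by simp
  also have "\<dots> = (of_nat (a * b) * qinv (a * b)) * (qinv a * qinv b)"
    by (simp add: algebra_simps)
  also have "\<dots> = qinv a * qinv b" using qinv_inv[of "a*b"] a b by simp
  finally show ?thesis .
qed

lemma qinv_fact_Suc: "qinv (fact (Suc i)) * of_nat (Suc i) = (qinv (fact i) :: 'a)"
proof -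
  have "qinv (fact (Suc i)) = (qinv (Suc i) * qinv (fact i) :: 'a)"
  proof -
    have "fact (Suc i) = Suc i * (fact i::nat)" by (simp del: mult_Suc)
    then show ?thesis using qinv_mult[of "Suc i" "fact i"] by (simp del: mult_Suc of_nat_Suc fact_Suc)
  qed
  then show ?thesis using qinv_inv[of "Suc i"] by (simp add: algebra_simps del: of_nat_Suc)
qed

lemma qinv_fact_Suc': "of_nat (Suc i) * qinv (fact (Suc i)) = (qinv (fact i) :: 'a)"
  using qinv_fact_Suc by (simp add: mult.commute del: of_nat_Suc)

lemma shiftY_nth: "shiftY (V::'a poly) c $ j = smult (qinv (fact j)) (V ^ j * (dY ^^ j) c)"
proof (induction c arbitrary: j)
  case 0
  then show ?case by simp
next
  case (pCons a c)
  show ?case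
  proof (cases j)
    case 0
    then show ?thesis using pCons(2)[of 0] by (simp add: shiftY_pCons)
  next
    case (Suc i)
    have "shiftY V (pCons a c) $ j = pCons 0 (shiftY V c $ Suc i) + V * shiftY V c $ i"
      by (simp add: shiftY_pCons Suc)
    also have "\<dots> = pCons 0 (smult (qinv (fact (Suc i))) (V ^ Suc i * (dY ^^ Suc i) c))
        + V * smult (qinv (fact i)) (V ^ i * (dY ^^ i) c)"
      using pCons(2) by simp
    also have "\<dots> = smult (qinv (fact (Suc i))) (V ^ Suc i * (dY ^^ Suc i) (pCons a c))"
    proof -
      define X where "X = (dY ^^ Suc i) c"
      define Y where "Y = (dY ^^ i) c"
      have a: "smult (qinv (fact (Suc i))) (V ^ Suc i * smult (of_nat (Suc i)) Y)
          = V * smult (qinv (fact i)) (V ^ i * Y)"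
        by (simp only: mult_smult_right smult_smult qinv_fact_Suc mult_smult_left power_Suc mult.assoc)
      have b: "smult (qinv (fact (Suc i))) (V ^ Suc i * pCons 0 X) = pCons 0 (smult (qinv (fact (Suc i))) (V ^ Suc i * X))"
        by simp
      show ?thesis
        unfolding dYn_pCons X_def[symmetric] Y_def[symmetric] distrib_left smult_add_right a b
        by (simp only: add.commute)
    qed
    finally show ?thesis using Suc by simp
  qed
qed

end


section \<open>The substitution operator\<close>

lemma shiftY_nth0: "shiftY V c $ 0 = c"
  by (induct c) (simp_all add: shiftY_pCons)

lemma substY_nth: "substY V F $ n = (\<Sum>k\<le>n. shiftY V (F $ k) $ (n - k))"
  by (simp add: substY_def)

lemma substY_add: "substY V (F + G) = substY V F + substY V G"
  by (rule fps_ext) (simp add: substY_nth shiftY_add sum.distrib)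

lemma substY_const: "substY V (fps_const c) = shiftY V c"
proof (rule fps_ext)
  fix n
  have "substY V (fps_const c) $ n = (\<Sum>k\<le>n. if k = 0 then shiftY V c $ n else 0)"
    unfolding substY_nth by (intro sum.cong) auto
  also have "\<dots> = shiftY V c $ n" by (simp add: sum.delta)
  finally show "substY V (fps_const c) $ n = shiftY V c $ n" .
qed

lemma substY_0 [simp]: "substY V 0 = 0"
  using substY_const[of V 0] by simp

lemma substY_X: "substY V (fps_X * F) = fps_X * substY V F"
proof (rule fps_ext)
  fix n
  show "substY V (fps_X * F) $ n = (fps_X * substY V F) $ n"
  proof (cases n)
    case 0 then show ?thesis by (simp add: substY_nth)
  next
    case (Suc m)
    show ?thesis unfolding Suc substY_nth sum.atMost_Suc_shift by (simp add: substY_nth)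
  qed
qed

definition ftl :: "'b::comm_ring_1 fps \<Rightarrow> 'b fps" where
  "ftl F = Abs_fps (\<lambda>n. F $ Suc n)"

lemma fps_decomp: "F = fps_const (F $ 0) + fps_X * ftl F"
  by (rule fps_ext) (simp add: ftl_def)

lemma substY_decomp: "substY V F = shiftY V (F $ 0) + fps_X * substY V (ftl F)"
  by (subst fps_decomp) (simp add: substY_add substY_X substY_const)

lemma substY_cmult: "substY V (fps_const c * G) = shiftY V c * substY V G"
proof (rule fps_ext)
  fix n show "substY V (fps_const c * G) $ n = (shiftY V c * substY V G) $ n"
  proof (induction n arbitrary: G)
    case 0
    show ?case by (simp add: substY_nth shiftY_nth0 fps_mult_nth)
  next
    case (Suc n)
    have t: "ftl (fps_const c * G) = fps_const c * ftl G"
      by (rule fps_ext) (simp add: ftl_def)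
    have "substY V (fps_const c * G) = shiftY V (c * G $ 0) + fps_X * substY V (fps_const c * ftl G)"
      by (subst substY_decomp) (simp add: t)
    moreover have "shiftY V c * substY V G = shiftY V (c * G $ 0) + fps_X * (shiftY V c * substY V (ftl G))"
      by (subst substY_decomp) (simp add: shiftY_mult algebra_simps)
    ultimately show ?case using Suc by simp
  qed
qed

lemma substY_mult: "substY V (F * G) = substY V F * substY V G"
proof (rule fps_ext)
  fix n show "substY V (F * G) $ n = (substY V F * substY V G) $ n"
  proof (induction n arbitrary: F)
    case 0
    show ?case by (simp add: substY_nth shiftY_nth0 fps_mult_nth)
  next
    case (Suc n)
    have e: "F * G = fps_const (F $ 0) * G + fps_X * (ftl F * G)"
      by (subst fps_decomp) (simp add: algebra_simps)
    have "substY V (F * G) = shiftY V (F $ 0) * substY V G + fps_X * substY V (ftl F * G)"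
      by (subst e) (simp add: substY_add substY_X substY_cmult)
    moreover have "substY V F * substY V G = shiftY V (F $ 0) * substY V G + fps_X * (substY V (ftl F) * substY V G)"
      by (subst substY_decomp) (simp add: algebra_simps)
    ultimately show ?case using Suc by simp
  qed
qed

lemma poly_lift_pCons: "poly (lift_poly (pCons a G)) F = fps_const [:a:] + F * poly (lift_poly G) F"
  by (simp add: lift_pCons)

lemma substY_poly: "substY V (poly (lift_poly G) F) = poly (lift_poly G) (substY V F)"
  by (induct G) (simp_all add: poly_lift_pCons substY_add substY_mult substY_const shiftY_const)

lemma poly_lift_Y: "poly (lift_poly G) fps_Y = fps_const G"
  by (induct G) (simp_all add: poly_lift_pCons fps_Y_def)

lemma substY_nth0: "substY V F $ 0 = F $ 0"
  by (simp add: substY_nth shiftY_nth0)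

lemma substY_zero_imp: "substY V F = 0 \<Longrightarrow> F = 0"
proof -
  assume h: "substY V F = 0"
  have "\<forall>F. substY V F = 0 \<longrightarrow> F $ n = 0" for n
  proof (induction n)
    case 0
    show ?case by (metis substY_nth0 fps_zero_nth)
  next
    case (Suc n)
    show ?case
    proof (intro allI impI)
      fix F assume F: "substY V F = 0"
      have F0: "F $ 0 = 0" using arg_cong[OF F, of "\<lambda>A. A $ 0"] by (simp add: substY_nth shiftY_nth0)
      have "fps_X * substY V (ftl F) = 0" using F substY_decomp[of V F] F0 by simp
      then have "substY V (ftl F) = 0"
        by (metis fps_X_mult_nth fps_ext fps_zero_nth diff_Suc_1 nat.distinct(1))
      then have "ftl F $ n = 0" using Suc by blast
      then show "F $ Suc n = 0" by (simp add: ftl_def)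
    qed
  qed
  then show "F = 0" using h by (auto intro: fps_ext)
qed

lemma substY_inj: "substY V F = substY V G \<Longrightarrow> F = G"
proof -
  assume h: "substY V F = substY V G"
  have "substY V (F - G) + substY V G = substY V F"
    by (simp flip: substY_add)
  then have "substY V (F - G) = 0" using h by simp
  then show "F = G" using substY_zero_imp by fastforce
qed


definition Ecoef :: "nat \<Rightarrow> nat \<Rightarrow> 'b::comm_ring_1" where
  "Ecoef n k = (-1) ^ k * qinv (fact k) * qinv (fact (n - k))"

definition Efun :: "'b::comm_ring_1 poly \<Rightarrow> nat \<Rightarrow> nat \<Rightarrow> 'b poly \<Rightarrow> 'b poly" where
  "Efun W n j H = (\<Sum>k\<le>n. smult (Ecoef n k) (W ^ (n - k) * (dY ^^ j) (W ^ k * H)))"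

lemma alg1: "(x::'b::comm_ring_1 poly) ^ Suc e * dw + w * smult c (x ^ e * du) = x ^ e * ([:c:] * du * w + x * dw)"
  by (simp add: algebra_simps)
lemma alg2: "(L::'b::comm_ring_1 poly) * (x * dw) + w * smult c (L * du) - smult d (L * w * du) = L * ([:c - d:] * du * w + x * dw)"
  by (simp add: algebra_simps smult_diff_left)
lemma alg3: "(x::'b::comm_ring_1 poly) * (y * a + b * z) = x * y * a + b * (x * z)"
  by (simp add: algebra_simps)
lemma alg3': "(x::'b::comm_ring_1 poly) * (y * a + b * z) = y * (x * a) + b * (x * z)"
  by (simp add: algebra_simps)
lemma alg5: "(b::'b::comm_ring_1 poly) * smult n (y * d) = smult n (y * b * d)"
  by (simp add: algebra_simps)

definition Sser :: "'b::comm_ring_1 poly \<Rightarrow> 'b poly \<Rightarrow> 'b poly fps" where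
  "Sser W G = Abs_fps (\<lambda>m. if m = 0 then G else smult ((-1) ^ m * qinv (fact m)) ((dY ^^ (m - 1)) (W ^ m * dY G)))"

lemma dYn_dYn: "(dY ^^ a) ((dY ^^ b) x) = (dY ^^ (a + b)) x"
  by (simp add: funpow_add)

lemma U_dY_pow: "U * dY (U ^ N) = smult (of_nat N) (U ^ N * dY U)"
proof (cases N)
  case (Suc k)
  show ?thesis unfolding Suc dY_power_Suc by (simp only: mult_smult_right power_Suc mult.assoc)
qed simp

context
  assumes Q: "\<forall>k::nat. k > 0 \<longrightarrow> (of_nat k :: 'a::comm_ring_1) dvd 1"
begin

lemmas qinv_simps[simp] = qinv_1[OF Q] qinv_Suc0[OF Q] qinv_fact0[OF Q]

lemma substY_taylor: "substY (V::'a poly) F $ n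
   = (\<Sum>k\<le>n. smult (qinv (fact (n - k))) (V ^ (n - k) * (dY ^^ (n - k)) (F $ k)))"
  by (simp add: substY_nth shiftY_nth[OF Q])


lemma Ecoef_fact: "k \<le> n \<Longrightarrow> of_nat (fact n) * (Ecoef n k :: 'a) = (-1) ^ k * of_nat (n choose k)"
proof -
  assume k: "k \<le> n"
  have "of_nat (fact n) * (Ecoef n k :: 'a)
     = (-1) ^ k * of_nat (n choose k) * (of_nat (fact k) * qinv (fact k)) * (of_nat (fact (n - k)) * qinv (fact (n - k)))"
    unfolding Ecoef_def binomial_fact_lemma[OF k, symmetric] by (simp only: of_nat_mult mult_ac)
  also have "\<dots> = (-1) ^ k * of_nat (n choose k)"
  proof -
    have a: "of_nat (fact k) * qinv (fact k) = (1::'a)" by (rule qinv_inv[OF Q]) simp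
    have b: "of_nat (fact (n - k)) * qinv (fact (n - k)) = (1::'a)" by (rule qinv_inv[OF Q]) simp
    show ?thesis unfolding a b by simp
  qed
  finally show ?thesis .
qed

lemma Ecoef_sum: "n > 0 \<Longrightarrow> (\<Sum>k\<le>n. Ecoef n k) = (0::'a)"
proof -
  assume n: "n > 0"
  have "of_nat (fact n) * (\<Sum>k\<le>n. Ecoef n k) = (\<Sum>k\<le>n. of_nat (n choose k) * (-1) ^ k * 1 ^ (n - k) :: 'a)"
    unfolding sum_distrib_left apply (intro sum.cong refl) apply (subst Ecoef_fact) by auto
  also have "\<dots> = ((-1) + 1) ^ n" by (rule binomial_ring[symmetric])
  also have "\<dots> = 0" using n by (simp add: power_0_left)
  finally have z: "of_nat (fact n) * (\<Sum>k\<le>n. Ecoef n k) = (0::'a)" .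
  have "(\<Sum>k\<le>n. Ecoef n k) = (qinv (fact n) * of_nat (fact n)) * (\<Sum>k\<le>n. Ecoef n k :: 'a)"
    using qinv_inv[OF Q, of "fact n"] by (simp add: mult.commute)
  also have "\<dots> = 0" using z by (simp add: mult.assoc)
  finally show ?thesis .
qed


lemma Efun_base: "n > 0 \<Longrightarrow> Efun (W::'a poly) n 0 H = 0"
proof -
  assume n: "n > 0"
  have "Efun W n 0 H = (\<Sum>k\<le>n. smult (Ecoef n k) (W ^ n * H))"
    unfolding Efun_def by (intro sum.cong refl) (simp add: mult.assoc[symmetric] power_add[symmetric])
  also have "\<dots> = smult (\<Sum>k\<le>n. Ecoef n k) (W ^ n * H)"
    by (simp add: smult_sum)
  also have "\<dots> = 0" using Ecoef_sum[OF n] by simp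
  finally show ?thesis .
qed

lemma Ecoef_Suc: "k \<le> n \<Longrightarrow> Ecoef (Suc n) k * of_nat (Suc n - k) = (Ecoef n k :: 'a)"
proof -
  assume k: "k \<le> n"
  then have e: "Suc n - k = Suc (n - k)" by simp
  show ?thesis unfolding Ecoef_def e mult.assoc qinv_fact_Suc[OF Q] ..
qed

lemma Efun_rec: "dY (Efun (W::'a poly) (Suc n) j H) = Efun W (Suc n) (Suc j) H + dY W * Efun W n j H"
proof -
  define B where "B k = (dY ^^ j) (W ^ k * H)" for k
  have "dY (Efun W (Suc n) j H) = (\<Sum>k\<le>Suc n. smult (Ecoef (Suc n) k) (W ^ (Suc n - k) * dY (B k)))
      + (\<Sum>k\<le>Suc n. smult (Ecoef (Suc n) k) (B k * dY (W ^ (Suc n - k))))"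
    unfolding Efun_def dY_sum B_def[symmetric]
    by (simp add: dY_smult dY_mult smult_add_right sum.distrib)
  also have "(\<Sum>k\<le>Suc n. smult (Ecoef (Suc n) k) (W ^ (Suc n - k) * dY (B k))) = Efun W (Suc n) (Suc j) H"
    unfolding Efun_def B_def by simp
  also have "(\<Sum>k\<le>Suc n. smult (Ecoef (Suc n) k) (B k * dY (W ^ (Suc n - k))))
      = (\<Sum>k\<le>n. dY W * smult (Ecoef n k) (W ^ (n - k) * B k))"
  proof -
    have "(\<Sum>k\<le>Suc n. smult (Ecoef (Suc n) k) (B k * dY (W ^ (Suc n - k))))
        = (\<Sum>k\<le>n. smult (Ecoef (Suc n) k) (B k * dY (W ^ (Suc n - k))))"
      by (simp add: sum.atMost_Suc)
    also have "\<dots> = (\<Sum>k\<le>n. dY W * smult (Ecoef n k) (W ^ (n - k) * B k))"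
    proof (intro sum.cong refl)
      fix k assume "k \<in> {..n}"
      then have k: "k \<le> n" by simp
      then have e: "Suc n - k = Suc (n - k)" by simp
      show "smult (Ecoef (Suc n) k) (B k * dY (W ^ (Suc n - k))) = dY W * smult (Ecoef n k) (W ^ (n - k) * B k)"
      proof -
        have cd: "Ecoef n k = Ecoef (Suc n) k * (of_nat (Suc (n - k)) :: 'a)"
          using Ecoef_Suc[OF k] e by simp
        show ?thesis unfolding e dY_power_Suc cd by (simp add: smult_smult mult_ac)
      qed
    qed
    finally show ?thesis .
  qed
  also have "\<dots> = dY W * Efun W n j H"
    unfolding Efun_def B_def sum_distrib_left ..
  finally show ?thesis .
qed

lemma Efun_zero: "j < n \<Longrightarrow> Efun (W::'a poly) n j H = 0"
proof (induction j arbitrary: n)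
  case 0
  then show ?case by (simp add: Efun_base)
next
  case (Suc j)
  then obtain m where m: "n = Suc m" by (cases n) auto
  have "Efun W (Suc m) (Suc j) H = dY (Efun W (Suc m) j H) - dY W * Efun W m j H"
    by (simp add: Efun_rec)
  also have "\<dots> = 0" using Suc m by simp
  finally show ?case using m by simp
qed

lemma Sser_subst: "substY (W::'a poly) (Sser W G) = fps_const G"
proof (rule fps_ext)
  fix n show "substY W (Sser W G) $ n = fps_const G $ n"
  proof (cases n)
    case 0
    then show ?thesis by (simp add: substY_nth0 Sser_def)
  next
    case (Suc m)
    have "substY W (Sser W G) $ Suc m = Efun W (Suc m) m (dY G)"
      unfolding substY_taylor Efun_def
    proof (intro sum.cong refl)
      fix k assume k: "k \<in> {..Suc m}"
      show "smult (qinv (fact (Suc m - k))) (W ^ (Suc m - k) * (dY ^^ (Suc m - k)) (Sser W G $ k))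
          = smult (Ecoef (Suc m) k) (W ^ (Suc m - k) * (dY ^^ m) (W ^ k * dY G))"
      proof (cases k)
        case 0
        have "(dY ^^ Suc m) G = (dY ^^ m) (dY G)" by (simp add: funpow_Suc_right del: funpow.simps)
        then show ?thesis using 0 by (simp add: Sser_def Ecoef_def del: funpow.simps)
      next
        case (Suc j)
        with k have j: "j \<le> m" by simp
        have e: "Suc m - Suc j + j = m" using j by simp
        have s: "Sser W G $ k = smult ((-1) ^ k * qinv (fact k)) ((dY ^^ j) (W ^ k * dY G))"
          by (simp add: Sser_def Suc)
        have e': "Suc m - k + j = m" using e Suc by simp
        have "(dY ^^ (Suc m - k)) (Sser W G $ k)
            = smult ((-1) ^ k * qinv (fact k)) ((dY ^^ m) (W ^ k * dY G))"
          unfolding s dYn_smult dYn_dYn e' ..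
        then show ?thesis unfolding Ecoef_def by (simp add: mult_smult_right smult_smult mult_ac)
      qed
    qed
    also have "\<dots> = 0" by (rule Efun_zero) simp
    finally show ?thesis using Suc by simp
  qed
qed

lemma Sser_Y: "substY (U ^ b) (Sser (U ^ b) [:0, 1:]) = (fps_Y :: 'a poly fps)"
  unfolding fps_Y_def by (rule Sser_subst)

lemma formal_inverse_eq: "formal_inverse (U::'a poly) b = Sser (U ^ b) [:0, 1:]"
  unfolding formal_inverse_def
proof (rule the_equality)
  show "substY (U ^ b) (Sser (U ^ b) [:0, 1:]) = fps_Y" by (rule Sser_Y)
  fix I assume h: "substY (U ^ b) I = fps_Y"
  show "I = Sser (U ^ b) [:0, 1:]"
    by (rule substY_inj[of "U ^ b"]) (simp only: h Sser_Y)
qed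

lemma vcoeff_eq: "vcoeff (U::'a poly) b m = Sser (U ^ b) U $ m"
proof -
  have "substY (U ^ b) (poly (lift_poly U) (formal_inverse U b)) = poly (lift_poly U) fps_Y"
    by (simp only: substY_poly formal_inverse_eq Sser_Y)
  also have "\<dots> = fps_const U" by (rule poly_lift_Y)
  also have "\<dots> = substY (U ^ b) (Sser (U ^ b) U)" by (rule Sser_subst[symmetric])
  finally have "poly (lift_poly U) (formal_inverse U b) = Sser (U ^ b) U" by (rule substY_inj)
  then show ?thesis by (simp add: vcoeff_def)
qed

lemma vcoeff_closed: "vcoeff (U::'a poly) b m
   = smult ((-1) ^ m * qinv (fact m) * qinv (Suc (b * m))) ((dY ^^ m) (U ^ Suc (b * m)))"
proof (cases m)
  case 0
  then show ?thesis by (simp add: vcoeff_eq Sser_def)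
next
  case (Suc j)
  define p where "p = b * m"
  have pw: "(U ^ b) ^ m = U ^ p" by (simp add: p_def power_mult)
  have qi: "qinv (Suc p) * of_nat (Suc p) = (1::'a)"
    using qinv_inv[OF Q, of "Suc p"] by (simp add: mult.commute del: of_nat_Suc)
  have d: "U ^ p * dY U = smult (qinv (Suc p)) (dY (U ^ Suc p))"
    unfolding dY_power_Suc smult_smult qi by simp
  have "vcoeff U b m = smult ((-1) ^ m * qinv (fact m)) ((dY ^^ j) (smult (qinv (Suc p)) (dY (U ^ Suc p))))"
    by (simp add: vcoeff_eq Sser_def Suc pw[unfolded Suc] d[symmetric] del: power_Suc funpow.simps)
  also have "\<dots> = smult ((-1) ^ m * qinv (fact m) * qinv (Suc p)) ((dY ^^ m) (U ^ Suc p))"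
    by (simp add: dYn_smult Suc funpow_Suc_right del: funpow.simps)
  finally show ?thesis by (simp add: p_def)
qed

lemma f_pos: "N \<le> Suc l \<Longrightarrow> smult (qinv (Suc l)) ((dY ^^ N) ((U::'a poly) ^ Suc l)) = U ^ (Suc l - N) * wpoly U N l"
proof (induction N)
  case 0
  then show ?case by (simp add: mult.commute)
next
  case (Suc N)
  define e where "e = l - N"
  have e1: "Suc l - N = Suc e" and e2: "Suc l - Suc N = e" using Suc.prems by (auto simp: e_def)
  have oi: "(of_int (int l - int N + 1) :: 'a) = of_nat (Suc e)"
    using Suc.prems by (simp add: e_def of_nat_diff)
  define w where "w = wpoly U N l"
  have "smult (qinv (Suc l)) ((dY ^^ Suc N) (U ^ Suc l)) = dY (smult (qinv (Suc l)) ((dY ^^ N) (U ^ Suc l)))"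
    by (simp only: dY_smult funpow.simps comp_def)
  also have "\<dots> = dY (U ^ Suc e * w)"
    using Suc.IH Suc.prems e1 by (simp only: w_def)
  also have "\<dots> = U ^ Suc e * dY w + w * smult (of_nat (Suc e)) (U ^ e * dY U)"
    by (simp only: dY_mult dY_power_Suc)
  also have "\<dots> = U ^ e * ([:of_nat (Suc e):] * dY U * w + U * dY w)"
    by (rule alg1)
  also have "\<dots> = U ^ (Suc l - Suc N) * wpoly U (Suc N) l"
    by (simp only: e2 wpoly.simps oi w_def)
  finally show ?case .
qed

lemma f_gen: "(U::'a poly) ^ N * smult (qinv (Suc l)) ((dY ^^ N) (U ^ Suc l)) = U ^ Suc l * wpoly U N l"
proof (induction N)
  case 0
  then show ?case by (simp add: mult.commute)
next
  case (Suc N)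
  define F where "F = smult (qinv (Suc l)) ((dY ^^ N) (U ^ Suc l))"
  define w where "w = wpoly U N l"
  have IH: "U ^ N * F = U ^ Suc l * w" using Suc by (simp only: F_def w_def)
  have C1: "U * dY (U ^ N * F) = U ^ Suc N * dY F + smult (of_nat N) (U ^ N * F * dY U)"
    by (simp only: dY_mult alg3 U_dY_pow alg5 power_Suc)
  have D1: "U * dY (U ^ Suc l * w) = U ^ Suc l * (U * dY w) + w * smult (of_nat (Suc l)) (U ^ Suc l * dY U)"
    by (simp only: dY_mult alg3' U_dY_pow)
  have "U ^ Suc N * smult (qinv (Suc l)) ((dY ^^ Suc N) (U ^ Suc l)) = U ^ Suc N * dY F"
    by (simp only: F_def dY_smult funpow.simps comp_def)
  also have "\<dots> = U * dY (U ^ N * F) - smult (of_nat N) (U ^ N * F * dY U)"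
    using C1 by (simp only: eq_diff_eq)
  also have "\<dots> = U * dY (U ^ Suc l * w) - smult (of_nat N) (U ^ Suc l * w * dY U)"
    by (simp only: IH)
  also have "\<dots> = U ^ Suc l * (U * dY w) + w * smult (of_nat (Suc l)) (U ^ Suc l * dY U) - smult (of_nat N) (U ^ Suc l * w * dY U)"
    by (simp only: D1)
  also have "\<dots> = U ^ Suc l * ([:of_nat (Suc l) - of_nat N:] * dY U * w + U * dY w)"
    by (rule alg2)
  also have "(of_nat (Suc l) - of_nat N :: 'a) = of_int (int l - int N + 1)"
    by simp
  finally show ?case by (simp only: w_def wpoly.simps)
qed

end

theorem mainTheorem8:
  fixes U :: "'a::comm_ring_1 poly" and a b m n :: nat
  assumes Qalg: "\<forall>k::nat. k > 0 \<longrightarrow> (of_nat k :: 'a) dvd 1"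
    and a: "a \<ge> 2" and b: "b \<ge> 2" and degU: "degree U \<le> a"
  shows "(int (b * m) - int m - int n + 1 \<ge> 0 \<longrightarrow>
            (dY ^^ n) (vcoeff U b m)
              = [: (-1) ^ m * qinv (fact m) :] * U ^ nat (int (b * m) - int m - int n + 1)
                  * wpoly U (m + n) (b * m))
       \<and> (int (b * m) - int m - int n + 1 < 0 \<longrightarrow>
            (\<exists>k. U ^ k * (U ^ nat (- (int (b * m) - int m - int n + 1)) * (dY ^^ n) (vcoeff U b m)
                      - [: (-1) ^ m * qinv (fact m) :] * wpoly U (m + n) (b * m)) = 0))"
proof -
  define l where "l = b * m"
  define N where "N = m + n"
  define c where "c = ((-1) ^ m * qinv (fact m) :: 'a)"
  define f where "f = smult (qinv (Suc l)) ((dY ^^ N) (U ^ Suc l))"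
  have dv: "(dY ^^ n) (vcoeff U b m) = smult c f"
    unfolding vcoeff_closed[OF Qalg] dYn_smult dYn_dYn f_def c_def l_def N_def
    by (simp add: smult_smult add.commute)
  have w: "wpoly U (m + n) (b * m) = wpoly U N l" by (simp add: N_def l_def)
  show ?thesis
  proof (intro conjI impI)
    assume h: "int (b * m) - int m - int n + 1 \<ge> 0"
    then have le: "N \<le> Suc l" unfolding N_def l_def by linarith
    have en: "nat (int (b * m) - int m - int n + 1) = Suc l - N"
      using le unfolding N_def l_def by linarith
    show "(dY ^^ n) (vcoeff U b m)
              = [: (-1) ^ m * qinv (fact m) :] * U ^ nat (int (b * m) - int m - int n + 1)
                  * wpoly U (m + n) (b * m)"
      unfolding dv en w f_def f_pos[OF Qalg le] c_def[symmetric] by (simp add: mult.assoc)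
  next
    assume h: "int (b * m) - int m - int n + 1 < 0"
    then have gt: "Suc l < N" unfolding N_def l_def by linarith
    have en: "nat (- (int (b * m) - int m - int n + 1)) = N - Suc l"
      using gt unfolding N_def l_def by linarith
    have pw: "U ^ Suc l * U ^ (N - Suc l) = U ^ N"
    proof -
      have "Suc l + (N - Suc l) = N" using gt by simp
      then show ?thesis by (metis power_add)
    qed
    have "U ^ Suc l * (U ^ (N - Suc l) * smult c f - [:c:] * wpoly U N l)
        = smult c (U ^ N * f) - [:c:] * (U ^ Suc l * wpoly U N l)"
      by (simp add: algebra_simps pw[symmetric])
    also have "\<dots> = 0"
      unfolding f_def f_gen[OF Qalg] by simp
    finally show "\<exists>k. U ^ k * (U ^ nat (- (int (b * m) - int m - int n + 1)) * (dY ^^ n) (vcoeff U b m)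
                      - [: (-1) ^ m * qinv (fact m) :] * wpoly U (m + n) (b * m)) = 0"
      unfolding en dv w c_def[symmetric] by blast
  qed
qed

end
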